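(* For every $p\ge0$, $m,n\ge0$ with $m+n\ge1$, and $k_1,\dots,k_m,\ell_1,\dots,\ell_n\ge0$, the open correlator $\langle\tau_{k_1}\cdots\tau_{k_m}\sigma_{\ell_1}\cdots\sigma_{\ell_n}\rangle^o_p$ vanishes unless $$k_1+\dots+k_m+\ell_1+\dots+\ell_n-m-\frac n2=\frac32(p-1).$$ Equivalently, for all $p\ge0$, $\sum_{k\ge0}\big((k-1)t_k\partial_{t_k}+(k-\tfrac12)s_k\partial_{s_k}\big)\mathcal F^o_p=\tfrac32(p-1)\mathcal F^o_p$.
   Context: The Burgers–KdV differential polynomials: $K_0=w$, $R_0=\rho$, $Q_0=w+\frac{\rho^2}2+\frac\epsilon2\rho_x$, $\partial_xK_n=\frac2{2n+1}(w\partial_x+\frac12w_x+\frac{\epsilon^2}8\partial_x^3)K_{n-1}$ (zero integration constant), $R_n=\frac2{2n+1}\big((w+\frac{\rho^2}2+\epsilon(\frac{\rho_x}2+\rho\partial_x)+\frac{\epsilon^2}2\partial_x^2)R_{n-1}+(\frac\rho2+\frac34\epsilon\partial_x)K_{n-1}\big)$, $Q_n=\frac1{n+1}(w+\frac{\rho^2}2+\epsilon(\frac{\rho_x}2+\rho\partial_x)+\frac{\epsilon^2}2\partial_x^2)Q_{n-1}$. Let $(w_{\rm top},\rho_{\rm top})$ solve $\partial_{t_n}w=\partial_xK_n$, $\partial_{t_n}\rho=\partial_xR_n$, $\partial_{s_n}w=0$, $\partial_{s_n}\rho=\partial_xQ_n$ ($t_0=x$) with $(w,\rho)|_{t_n=x\delta_{n,0},s=0}=(x,0)$,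 and let $\log\tau_2=\sum_{p\ge0}\epsilon^{p-1}\mathcal F^o_p(\mathbf t,\mathbf s)$ be defined by $\epsilon\partial_{t_n}\log\tau_2=R_n(w_{\rm top},\rho_{\rm top};\epsilon)$, $\epsilon\partial_{s_n}\log\tau_2=Q_n(w_{\rm top},\rho_{\rm top};\epsilon)$, normalized by $\mathcal F^o_p(\mathbf 0,\mathbf 0)=0$. The open correlators are the Taylor coefficients $\mathcal F^o_p=\sum_{m,n\ge0}\sum_{k_i,\ell_j\ge0}\frac{\langle\tau_{k_1}\cdots\tau_{k_m}\sigma_{\ell_1}\cdots\sigma_{\ell_n}\rangle^o_p}{m!\,n!}t_{k_1}\cdots t_{k_m}s_{\ell_1}\cdots s_{\ell_n}$ (symmetric in the $\tau$'s and in the $\sigma$'s). *)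

theory Defs
  imports Complex_Main "HOL-Library.Poly_Mapping"
begin

text \<open>Jet variables: W i = d^i w / dx^i, Rho i = d^i rho / dx^i, Eps = epsilon.
  Differential polynomials are multivariate polynomials over the rationals,
  represented with HOL-Library.Poly_Mapping.\<close>

datatype dvar = W nat | Rho nat | Eps

type_synonym dpoly = "(dvar \<Rightarrow>\<^sub>0 nat) \<Rightarrow>\<^sub>0 rat"

definition dconst :: "rat \<Rightarrow> dpoly" where
  "dconst c = Poly_Mapping.single 0 c"

definition dvarp :: "dvar \<Rightarrow> dpoly" where
  "dvarp v = Poly_Mapping.single (Poly_Mapping.single v 1) 1"

abbreviation dw :: dpoly where "dw \<equiv> dvarp (W 0)"
abbreviation dwx :: dpoly where "dwx \<equiv> dvarp (W 1)"
abbreviation drho :: dpoly where "drho \<equiv> dvarp (Rho 0)"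
abbreviation drhox :: dpoly where "drhox \<equiv> dvarp (Rho 1)"
abbreviation deps :: dpoly where "deps \<equiv> dvarp Eps"

definition Dv :: "dvar \<Rightarrow> dpoly" where
  "Dv v = (case v of W i \<Rightarrow> dvarp (W (Suc i)) | Rho i \<Rightarrow> dvarp (Rho (Suc i)) | Eps \<Rightarrow> 0)"

definition Dmon :: "(dvar \<Rightarrow>\<^sub>0 nat) \<Rightarrow> dpoly" where
  "Dmon m = (\<Sum>v\<in>Poly_Mapping.keys m.
      Poly_Mapping.single (m - Poly_Mapping.single v 1) (of_nat (Poly_Mapping.lookup m v)) * Dv v)"

definition Dx :: "dpoly \<Rightarrow> dpoly" where
  "Dx p = (\<Sum>m\<in>Poly_Mapping.keys p. dconst (Poly_Mapping.lookup p m) * Dmon m)"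

text \<open>Zero integration constant: no monomial lies in Q[epsilon]
  (i.e. the differential polynomial vanishes at w = rho = 0).\<close>
definition no_const :: "dpoly \<Rightarrow> bool" where
  "no_const p \<longleftrightarrow> (\<forall>m\<in>Poly_Mapping.keys p. \<exists>v\<in>Poly_Mapping.keys m. v \<noteq> Eps)"

definition Lop :: "dpoly \<Rightarrow> dpoly" where
  "Lop P = (dw + dconst (1/2) * drho * drho + dconst (1/2) * deps * drhox) * P
           + deps * drho * Dx P + dconst (1/2) * deps * deps * Dx (Dx P)"

definition is_K_family :: "(nat \<Rightarrow> dpoly) \<Rightarrow> bool" where
  "is_K_family K \<longleftrightarrow> K 0 = dw \<and>
     (\<forall>n. Dx (K (Suc n)) = dconst (2 / (2 * of_nat (Suc n) + 1)) *
          (dw * Dx (K n) + dconst (1/2) * dwx * K n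
           + dconst (1/8) * deps * deps * Dx (Dx (Dx (K n))))
        \<and> no_const (K (Suc n)))"

primrec Rfam :: "(nat \<Rightarrow> dpoly) \<Rightarrow> nat \<Rightarrow> dpoly" where
  "Rfam K 0 = drho"
| "Rfam K (Suc n) = dconst (2 / (2 * of_nat (Suc n) + 1)) *
     (Lop (Rfam K n) + dconst (1/2) * drho * K n + dconst (3/4) * deps * Dx (K n))"

primrec Qfam :: "nat \<Rightarrow> dpoly" where
  "Qfam 0 = dw + dconst (1/2) * drho * drho + dconst (1/2) * deps * drhox"
| "Qfam (Suc n) = dconst (1 / (of_nat (Suc n) + 1)) * Lop (Qfam n)"


datatype svar = E | T nat | S nat

text \<open>A formal power series is its coefficient function on monomials
  (finitely supported exponent vectors).\<close>
type_synonym ser = "(svar \<Rightarrow>\<^sub>0 nat) \<Rightarrow> rat"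

definition sone :: ser where
  "sone = (\<lambda>m. if m = 0 then 1 else 0)"

definition smult :: "ser \<Rightarrow> ser \<Rightarrow> ser" where
  "smult f g = (\<lambda>m. \<Sum>(a, b)\<in>{(a, b). a + b = m}. f a * g b)"

primrec spow :: "ser \<Rightarrow> nat \<Rightarrow> ser" where
  "spow f 0 = sone"
| "spow f (Suc n) = smult f (spow f n)"

definition svarser :: "svar \<Rightarrow> ser" where
  "svarser v = (\<lambda>m. if m = Poly_Mapping.single v 1 then 1 else 0)"

definition sderiv :: "svar \<Rightarrow> ser \<Rightarrow> ser" where
  "sderiv v f = (\<lambda>m. of_nat (Poly_Mapping.lookup m v + 1) * f (m + Poly_Mapping.single v 1))"

definition seval :: "(dvar \<Rightarrow> ser) \<Rightarrow> dpoly \<Rightarrow> ser" where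
  "seval \<sigma> p = (\<lambda>c. \<Sum>m\<in>Poly_Mapping.keys p. Poly_Mapping.lookup p m *
      Finite_Set.fold (\<lambda>v acc. smult (spow (\<sigma> v) (Poly_Mapping.lookup m v)) acc) sone (Poly_Mapping.keys m) c)"

text \<open>Jets of (w, rho) with x = t_0, and eps substituted by the formal variable E.\<close>
definition jet :: "ser \<Rightarrow> ser \<Rightarrow> dvar \<Rightarrow> ser" where
  "jet w rho v = (case v of W i \<Rightarrow> (sderiv (T 0) ^^ i) w
                          | Rho i \<Rightarrow> (sderiv (T 0) ^^ i) rho
                          | Eps \<Rightarrow> svarser E)"

definition is_top_solution :: "(nat \<Rightarrow> dpoly) \<Rightarrow> ser \<Rightarrow> ser \<Rightarrow> bool" where
  "is_top_solution K w rho \<longleftrightarrow>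
     (\<forall>n. sderiv (T n) w = sderiv (T 0) (seval (jet w rho) (K n))) \<and>
     (\<forall>n. sderiv (T n) rho = sderiv (T 0) (seval (jet w rho) (Rfam K n))) \<and>
     (\<forall>n. sderiv (S n) w = (\<lambda>_. 0)) \<and>
     (\<forall>n. sderiv (S n) rho = sderiv (T 0) (seval (jet w rho) (Qfam n))) \<and>
     (\<forall>m. (\<forall>n. Poly_Mapping.lookup m (T (Suc n)) = 0) \<and> (\<forall>n. Poly_Mapping.lookup m (S n) = 0) \<longrightarrow>
          w m = (if m = Poly_Mapping.single (T 0) 1 then 1 else 0) \<and> rho m = 0)"

text \<open>G = eps log tau_2 = sum_p eps^p F^o_p, characterised by
  d_{t_n} G = R_n, d_{s_n} G = Q_n and F^o_p(0,0) = 0.\<close>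
definition is_eps_log_tau2 :: "(nat \<Rightarrow> dpoly) \<Rightarrow> ser \<Rightarrow> ser \<Rightarrow> ser \<Rightarrow> bool" where
  "is_eps_log_tau2 K w rho G \<longleftrightarrow>
     (\<forall>n. sderiv (T n) G = seval (jet w rho) (Rfam K n)) \<and>
     (\<forall>n. sderiv (S n) G = seval (jet w rho) (Qfam n)) \<and>
     (\<forall>p. G (Poly_Mapping.single E p) = 0)"

definition open_corr :: "ser \<Rightarrow> nat \<Rightarrow> nat list \<Rightarrow> nat list \<Rightarrow> rat" where
  "open_corr G p ks ls =
     G (Poly_Mapping.single E p + (\<Sum>k\<leftarrow>ks. Poly_Mapping.single (T k) 1)
                                 + (\<Sum>l\<leftarrow>ls. Poly_Mapping.single (S l) 1))
     * (\<Prod>k\<in>set ks. of_nat (fact (count_list ks k)))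
     * (\<Prod>l\<in>set ls. of_nat (fact (count_list ls l)))"

end

theory Submission
  imports Defs
begin

definition lin :: "('a \<Rightarrow> int) \<Rightarrow> ('a \<Rightarrow>\<^sub>0 nat) \<Rightarrow> int" where
  "lin f m = (\<Sum>v\<in>Poly_Mapping.keys m. int (Poly_Mapping.lookup m v) * f v)"

lemma lin_superset:
  assumes "finite A" "Poly_Mapping.keys m \<subseteq> A"
  shows "lin f m = (\<Sum>v\<in>A. int (Poly_Mapping.lookup m v) * f v)"
  unfolding lin_def
  by (rule sum.mono_neutral_left) (use assms in \<open>auto simp: in_keys_iff\<close>)

lemma lin_add: "lin f (a + b) = lin f a + lin f b"
proof -
  let ?A = "Poly_Mapping.keys a \<union> Poly_Mapping.keys b"
  have "lin f (a + b) = (\<Sum>v\<in>?A. int (Poly_Mapping.lookup (a+b) v) * f v)"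
    by (rule lin_superset) (auto dest: keys_add[THEN subsetD])
  also have "\<dots> = (\<Sum>v\<in>?A. int (Poly_Mapping.lookup a v) * f v) + (\<Sum>v\<in>?A. int (Poly_Mapping.lookup b v) * f v)"
    by (simp add: lookup_add sum.distrib algebra_simps)
  also have "\<dots> = lin f a + lin f b"
    by (subst (1 2) lin_superset[where A="?A"]) auto
  finally show ?thesis .
qed

lemma lin_zero [simp]: "lin f 0 = 0"
  by (simp add: lin_def)

lemma lin_single [simp]: "lin f (Poly_Mapping.single v n) = int n * f v"
  by (cases "n = 0") (simp_all add: lin_def)

lemma lin_nonneg: "(\<And>v. f v \<ge> 0) \<Longrightarrow> lin f m \<ge> 0"
  unfolding lin_def by (intro sum_nonneg) auto

lemma lin_minus_single:
  fixes m :: "'a \<Rightarrow>\<^sub>0 nat"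
  assumes "v \<in> Poly_Mapping.keys m"
  shows "m = (m - Poly_Mapping.single v 1) + Poly_Mapping.single v 1"
proof (intro poly_mapping_eqI)
  fix k
  have "Poly_Mapping.lookup m v \<noteq> 0" using assms by (simp add: in_keys_iff)
  then show "Poly_Mapping.lookup m k = Poly_Mapping.lookup (m - Poly_Mapping.single v 1 + Poly_Mapping.single v 1) k"
    by (cases "k = v") (simp_all add: lookup_add lookup_minus lookup_single when_def)
qed

lemma finite_below:
  "finite {a :: 'a \<Rightarrow>\<^sub>0 nat. \<forall>v. Poly_Mapping.lookup a v \<le> Poly_Mapping.lookup c v}"
proof -
  let ?B = "\<Union>v\<in>Poly_Mapping.keys c. {0..Poly_Mapping.lookup c v}"
  let ?F = "{f. \<forall>x. (x \<in> Poly_Mapping.keys c \<longrightarrow> f x \<in> ?B) \<and> (x \<notin> Poly_Mapping.keys c \<longrightarrow> f x = 0)}"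
  have "finite ?F" by (rule finite_set_of_finite_funs) auto
  then have "finite (Poly_Mapping.lookup -` ?F)"
  proof (rule finite_vimageI)
    show "inj (Poly_Mapping.lookup :: ('a \<Rightarrow>\<^sub>0 nat) \<Rightarrow> _)"
    proof (rule injI)
      fix x y :: "'a \<Rightarrow>\<^sub>0 nat" assume "Poly_Mapping.lookup x = Poly_Mapping.lookup y"
      then show "x = y" by (intro poly_mapping_eqI) simp
    qed
  qed
  moreover have "{a :: 'a \<Rightarrow>\<^sub>0 nat. \<forall>v. Poly_Mapping.lookup a v \<le> Poly_Mapping.lookup c v} \<subseteq> Poly_Mapping.lookup -` ?F"
  proof
    fix a :: "'a \<Rightarrow>\<^sub>0 nat" assume "a \<in> {a. \<forall>v. Poly_Mapping.lookup a v \<le> Poly_Mapping.lookup c v}"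
    then have le: "\<And>v. Poly_Mapping.lookup a v \<le> Poly_Mapping.lookup c v" by auto
    show "a \<in> Poly_Mapping.lookup -` ?F"
    proof (simp, intro allI conjI impI)
      fix x assume "x \<in> Poly_Mapping.keys c"
      then show "\<exists>v\<in>Poly_Mapping.keys c. Poly_Mapping.lookup a x \<le> Poly_Mapping.lookup c v"
        using le by blast
    next
      fix x assume "x \<notin> Poly_Mapping.keys c"
      then show "Poly_Mapping.lookup a x = 0" using le[of x] by (simp add: in_keys_iff)
    qed
  qed
  ultimately show ?thesis by (rule finite_subset[rotated])
qed

lemma finite_conv: "finite {(a, b). a + b = (c :: 'a \<Rightarrow>\<^sub>0 nat)}"
proof -
  let ?A = "{a :: 'a \<Rightarrow>\<^sub>0 nat. \<forall>v. Poly_Mapping.lookup a v \<le> Poly_Mapping.lookup c v}"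
  have "{(a, b). a + b = c} \<subseteq> ?A \<times> ?A"
    by (auto simp: lookup_add)
  then show ?thesis by (rule finite_subset) (intro finite_SigmaI finite_below)
qed

lemma smult_comm: "smult f g = smult g f"
  unfolding smult_def
  by (rule ext, rule sum.reindex_bij_witness[where i="\<lambda>(a,b). (b,a)" and j="\<lambda>(a,b). (b,a)"])
     (auto simp: add.commute mult.commute)

lemma smult_alt: "smult f g c = (\<Sum>ab\<in>{(a, b). a + b = c}. f (fst ab) * g (snd ab))"
  by (simp add: smult_def case_prod_unfold)

lemma smult_assoc: "smult f (smult g h) = smult (smult f g) h"
proof
  fix c
  let ?P = "\<lambda>c. {(a, b). a + b = (c :: svar \<Rightarrow>\<^sub>0 nat)}"
  have "smult f (smult g h) c = (\<Sum>ab\<in>?P c. \<Sum>xy\<in>?P (snd ab). f (fst ab) * (g (fst xy) * h (snd xy)))"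
    unfolding smult_alt by (simp add: sum_distrib_left)
  also have "\<dots> = (\<Sum>(ab,xy)\<in>Sigma (?P c) (\<lambda>ab. ?P (snd ab)). f (fst ab) * (g (fst xy) * h (snd xy)))"
    by (rule sum.Sigma) (auto simp: finite_conv)
  also have "\<dots> = (\<Sum>(ba,xy)\<in>Sigma (?P c) (\<lambda>ba. ?P (fst ba)). f (fst xy) * (g (snd xy) * h (snd ba)))"
    by (rule sum.reindex_bij_witness[where i="\<lambda>((b,y),(a,x)). ((a, x+y), (x,y))"
                                     and j="\<lambda>((a,b),(x,y)). ((a+x, y), (a, x))"])
       (auto simp: add.assoc)
  also have "\<dots> = (\<Sum>ba\<in>?P c. \<Sum>xy\<in>?P (fst ba). f (fst xy) * (g (snd xy) * h (snd ba)))"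
    by (rule sum.Sigma[symmetric]) (auto simp: finite_conv)
  also have "\<dots> = smult (smult f g) h c"
    unfolding smult_alt by (simp add: sum_distrib_right mult.assoc)
  finally show "smult f (smult g h) c = smult (smult f g) h c" .
qed

lemma smult_lcomm: "smult a (smult b c) = smult b (smult a c)"
  by (metis smult_assoc smult_comm)


fun svw :: "svar \<Rightarrow> int" where
  "svw E = -3" | "svw (T k) = 2 * int k - 2" | "svw (S l) = 2 * int l - 1"

fun sdg :: "svar \<Rightarrow> int" where
  "sdg E = 0" | "sdg (T k) = (if k = 0 then 0 else 1)" | "sdg (S l) = 1"

fun dvw :: "dvar \<Rightarrow> int" where
  "dvw (W i) = 2 * int i - 2" | "dvw (Rho i) = 2 * int i - 1" | "dvw Eps = -3"

lemma sdg_nonneg: "sdg v \<ge> 0"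
  by (cases v) auto

lemma lin_sdg_nonneg: "lin sdg a \<ge> 0"
  by (rule lin_nonneg) (rule sdg_nonneg)

definition HB :: "int \<Rightarrow> int \<Rightarrow> ser \<Rightarrow> bool" where
  "HB D d f \<longleftrightarrow> (\<forall>a. lin sdg a < D \<longrightarrow> f a \<noteq> 0 \<longrightarrow> lin svw a = d)"

lemma HB_smult:
  assumes "HB D d1 f" "HB D d2 g"
  shows "HB D (d1 + d2) (smult f g)"
  unfolding HB_def
proof (intro allI impI)
  fix c assume c: "lin sdg c < D" "smult f g c \<noteq> 0"
  then obtain ab where ab: "ab \<in> {(a, b). a + b = c}" "f (fst ab) * g (snd ab) \<noteq> 0"
    unfolding smult_alt by (meson sum.not_neutral_contains_not_neutral)
  obtain a b where [simp]: "ab = (a, b)" by (cases ab)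
  from ab have abc: "a + b = c" and fa: "f a \<noteq> 0" and gb: "g b \<noteq> 0" by auto
  have "lin sdg a < D" using c(1) abc lin_add[of sdg a b] lin_sdg_nonneg[of b] by simp
  with assms(1) fa have "lin svw a = d1" unfolding HB_def by blast
  moreover have "lin sdg b < D" using c(1) abc lin_add[of sdg a b] lin_sdg_nonneg[of a] by simp
  with assms(2) gb have "lin svw b = d2" unfolding HB_def by blast
  ultimately show "lin svw c = d1 + d2" using abc lin_add[of svw a b] by simp
qed

lemma HB_sone: "HB D 0 sone"
  by (simp add: HB_def sone_def)

lemma HB_spow: "HB D d f \<Longrightarrow> HB D (int n * d) (spow f n)"
proof (induction n)
  case 0 then show ?case by (simp add: HB_sone)
next
  case (Suc n)
  then have "HB D (d + int n * d) (spow f (Suc n))" by (simp add: HB_smult)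
  then show ?case by (simp add: algebra_simps)
qed

lemma HB_fold:
  assumes "finite A" "\<forall>v\<in>A. HB D (wv v) (\<sigma> v)"
  shows "HB D (\<Sum>v\<in>A. int (e v) * wv v)
           (Finite_Set.fold (\<lambda>v acc. smult (spow (\<sigma> v) (e v)) acc) sone A)"
proof -
  interpret comp_fun_commute "\<lambda>v acc. smult (spow (\<sigma> v) (e v)) acc"
    by unfold_locales (auto simp: fun_eq_iff smult_lcomm)
  show ?thesis using assms
  proof (induction A rule: finite_induct)
    case empty then show ?case by (simp add: HB_sone)
  next
    case (insert x F)
    then show ?case by (simp add: HB_smult HB_spow)
  qed
qed

lemma seval_HB:
  assumes "\<forall>m\<in>Poly_Mapping.keys P. lin dvw m = d" "\<forall>v. HB D (dvw v) (\<sigma> v)"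
  shows "HB D d (seval \<sigma> P)"
  unfolding HB_def
proof (intro allI impI)
  fix c assume c: "lin sdg c < D" "seval \<sigma> P c \<noteq> 0"
  then obtain m where m: "m \<in> Poly_Mapping.keys P"
    "Poly_Mapping.lookup P m * Finite_Set.fold (\<lambda>v acc. smult (spow (\<sigma> v) (Poly_Mapping.lookup m v)) acc) sone (Poly_Mapping.keys m) c \<noteq> 0"
    unfolding seval_def by (meson sum.not_neutral_contains_not_neutral)
  have "HB D (\<Sum>v\<in>Poly_Mapping.keys m. int (Poly_Mapping.lookup m v) * dvw v)
      (Finite_Set.fold (\<lambda>v acc. smult (spow (\<sigma> v) (Poly_Mapping.lookup m v)) acc) sone (Poly_Mapping.keys m))"
    by (rule HB_fold) (use assms(2) in auto)
  then have "lin svw c = lin dvw m" using m(2) c(1) unfolding HB_def lin_def[of dvw] by auto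
  then show "lin svw c = d" using assms(1) m(1) by simp
qed

lemma HB_sderivT0:
  assumes "HB D d f"
  shows "HB D (d + 2) (sderiv (T 0) f)"
  unfolding HB_def
proof (intro allI impI)
  fix a assume a: "lin sdg a < D" "sderiv (T 0) f a \<noteq> 0"
  then have fa: "f (a + Poly_Mapping.single (T 0) 1) \<noteq> 0" by (simp add: sderiv_def)
  have "lin sdg (a + Poly_Mapping.single (T 0) 1) < D" using a(1) by (simp add: lin_add)
  with assms fa have "lin svw (a + Poly_Mapping.single (T 0) 1) = d" unfolding HB_def by blast
  then show "lin svw a = d + 2" by (simp add: lin_add)
qed

lemma HB_iter: "HB D d f \<Longrightarrow> HB D (d + 2 * int i) ((sderiv (T 0) ^^ i) f)"
proof (induction i)
  case 0 then show ?case by simp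
next
  case (Suc i)
  then have "HB D (d + 2 * int i + 2) ((sderiv (T 0) ^^ Suc i) f)" by (simp add: HB_sderivT0)
  then show ?case by (simp add: algebra_simps)
qed

lemma HB_jet:
  assumes "HB D (-2) w" "HB D (-1) rho"
  shows "HB D (dvw v) (jet w rho v)"
proof (cases v)
  case (W i)
  then show ?thesis using HB_iter[OF assms(1), of i] by (simp add: jet_def algebra_simps)
next
  case (Rho i)
  then show ?thesis using HB_iter[OF assms(2), of i] by (simp add: jet_def algebra_simps)
next
  case Eps
  then show ?thesis by (auto simp: jet_def HB_def svarser_def)
qed

lemma HB_step:
  assumes "sderiv v f = g" "v \<in> Poly_Mapping.keys a" "lin sdg a < D + 1" "sdg v = 1"
    "HB D e g" "f a \<noteq> 0"
  shows "lin svw a = e + svw v"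
proof -
  define a0 where "a0 = a - Poly_Mapping.single v 1"
  have aa: "a = a0 + Poly_Mapping.single v 1" unfolding a0_def by (rule lin_minus_single) fact
  have "g a0 = of_nat (Poly_Mapping.lookup a0 v + 1) * f a" using assms(1) aa by (auto simp: sderiv_def)
  then have "g a0 \<noteq> 0" using assms(6) by simp
  moreover have "lin sdg a0 < D" using assms(3,4) aa lin_add[of sdg a0] by simp
  ultimately have "lin svw a0 = e" using assms(5) unfolding HB_def by blast
  then show ?thesis using aa by (simp add: lin_add)
qed


definition dhom :: "int \<Rightarrow> dpoly \<Rightarrow> bool" where
  "dhom d P \<longleftrightarrow> (\<forall>m\<in>Poly_Mapping.keys P. lin dvw m = d)"

lemma dhom_zero [simp]: "dhom d 0"
  by (simp add: dhom_def)

lemma dhom_add: "dhom d P \<Longrightarrow> dhom d Q \<Longrightarrow> dhom d (P + Q)"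
  unfolding dhom_def
proof
  fix m assume P: "\<forall>m\<in>Poly_Mapping.keys P. lin dvw m = d" and Q: "\<forall>m\<in>Poly_Mapping.keys Q. lin dvw m = d"
    and m: "m \<in> Poly_Mapping.keys (P + Q)"
  have "m \<in> Poly_Mapping.keys P \<union> Poly_Mapping.keys Q" using keys_add[of P Q] m by (rule subsetD)
  then show "lin dvw m = d" using P Q by blast
qed

lemma dhom_mult: "dhom d1 P \<Longrightarrow> dhom d2 Q \<Longrightarrow> dhom (d1 + d2) (P * Q)"
  unfolding dhom_def using keys_mult[of P Q] by (force simp: lin_add)

lemma dhom_sum: "finite A \<Longrightarrow> (\<And>x. x \<in> A \<Longrightarrow> dhom d (f x)) \<Longrightarrow> dhom d (\<Sum>x\<in>A. f x)"
  by (induction A rule: finite_induct) (auto intro: dhom_add)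

lemma dhom_single: "dhom (lin dvw m) (Poly_Mapping.single m c)"
  by (simp add: dhom_def)

lemma dhom_dconst: "dhom 0 (dconst c)"
  unfolding dconst_def using dhom_single[of 0 c] by simp

lemma dhom_dvarp: "dhom (dvw v) (dvarp v)"
  unfolding dvarp_def using dhom_single[of "Poly_Mapping.single v 1" 1] by simp

lemma dhom_cmult: "dhom d P \<Longrightarrow> dhom d (dconst c * P)"
  using dhom_mult[OF dhom_dconst] by fastforce

lemma dhom_cong: "dhom d P \<Longrightarrow> d = e \<Longrightarrow> dhom e P" by simp

lemma dhom_Dv: "dhom (dvw v + 2) (Dv v)"
  by (cases v) (auto simp: Dv_def intro!: dhom_cong[OF dhom_dvarp])

lemma lin_minus_single_eq:
  assumes "v \<in> Poly_Mapping.keys m"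
  shows "lin f (m - Poly_Mapping.single v 1) = lin f m - f v"
  using lin_add[of f "m - Poly_Mapping.single v 1" "Poly_Mapping.single v 1"] lin_minus_single[OF assms]
  by simp

lemma dhom_Dmon: "dhom (lin dvw m + 2) (Dmon m)"
  unfolding Dmon_def
proof (rule dhom_sum)
  fix v assume v: "v \<in> Poly_Mapping.keys m"
  have "dhom (lin dvw (m - Poly_Mapping.single v 1) + (dvw v + 2))
     (Poly_Mapping.single (m - Poly_Mapping.single v 1) (of_nat (Poly_Mapping.lookup m v)) * Dv v)"
    by (rule dhom_mult[OF dhom_single dhom_Dv])
  then show "dhom (lin dvw m + 2)
     (Poly_Mapping.single (m - Poly_Mapping.single v 1) (of_nat (Poly_Mapping.lookup m v)) * Dv v)"
    using lin_minus_single_eq[OF v] by simp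
qed simp

lemma dhom_Dx: "dhom d P \<Longrightarrow> dhom (d + 2) (Dx P)"
  unfolding Dx_def
proof (rule dhom_sum)
  fix m assume P: "dhom d P" and m: "m \<in> Poly_Mapping.keys P"
  then have "lin dvw m = d" by (simp add: dhom_def)
  then show "dhom (d + 2) (dconst (Poly_Mapping.lookup P m) * Dmon m)"
    using dhom_cmult[OF dhom_Dmon[of m]] by simp
qed simp

lemma dhom_Lop: "dhom d P \<Longrightarrow> dhom (d - 2) (Lop P)"
proof -
  assume P: "dhom d P"
  have w: "dhom (-2) dw" using dhom_dvarp[of "W 0"] by simp
  have r: "dhom (-1) drho" using dhom_dvarp[of "Rho 0"] by simp
  have rx: "dhom 1 drhox" using dhom_dvarp[of "Rho 1"] by simp
  have rx': "dhom 1 (dvarp (Rho (Suc 0)))" using dhom_dvarp[of "Rho 1"] by simp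
  have e: "dhom (-3) deps" using dhom_dvarp[of Eps] by simp
  have A1: "dhom (-2) (dconst (1/2) * drho * drho)"
    by (rule dhom_cong[OF dhom_mult[OF dhom_cmult[OF r] r]]) simp
  have A2: "dhom (-2) (dconst (1/2) * deps * drhox)"
    by (rule dhom_cong[OF dhom_mult[OF dhom_cmult[OF e] rx]]) simp
  have A: "dhom (-2) (dw + dconst (1/2) * drho * drho + dconst (1/2) * deps * drhox)"
    by (rule dhom_add[OF dhom_add[OF w A1] A2])
  have L1: "dhom (d - 2) ((dw + dconst (1/2) * drho * drho + dconst (1/2) * deps * drhox) * P)"
    by (rule dhom_cong[OF dhom_mult[OF A P]]) simp
  have L2: "dhom (d - 2) (deps * drho * Dx P)"
    by (rule dhom_cong[OF dhom_mult[OF dhom_mult[OF e r] dhom_Dx[OF P]]]) simp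
  have L3: "dhom (d - 2) (dconst (1/2) * deps * deps * Dx (Dx P))"
    by (rule dhom_cong[OF dhom_mult[OF dhom_mult[OF dhom_cmult[OF e] e] dhom_Dx[OF dhom_Dx[OF P]]]]) simp
  show ?thesis unfolding Lop_def
    by (rule dhom_add[OF dhom_add[OF L1 L2] L3])
qed

lemma dhom_Qfam: "dhom (-2 - 2 * int n) (Qfam n)"
proof (induction n)
  case 0
  have w: "dhom (-2) dw" using dhom_dvarp[of "W 0"] by simp
  have r: "dhom (-1) drho" using dhom_dvarp[of "Rho 0"] by simp
  have rx: "dhom 1 drhox" using dhom_dvarp[of "Rho 1"] by simp
  have rx': "dhom 1 (dvarp (Rho (Suc 0)))" using dhom_dvarp[of "Rho 1"] by simp
  have e: "dhom (-3) deps" using dhom_dvarp[of Eps] by simp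
  show ?case
    by (simp, intro dhom_add w) (auto intro!: dhom_cong[OF dhom_mult] dhom_cmult r e rx rx' simp: mult.assoc)
next
  case (Suc n)
  then show ?case by (auto intro!: dhom_cmult dhom_cong[OF dhom_Lop])
qed

lemma dhom_Rfam:
  assumes "\<And>n. dhom (-2 - 2 * int n) (K n)"
  shows "dhom (-1 - 2 * int n) (Rfam K n)"
proof (induction n)
  case 0
  show ?case using dhom_dvarp[of "Rho 0"] by simp
next
  case (Suc n)
  have r: "dhom (-1) drho" using dhom_dvarp[of "Rho 0"] by simp
  have e: "dhom (-3) deps" using dhom_dvarp[of Eps] by simp
  show ?case
    by (simp, intro dhom_cmult dhom_add)
       (auto intro!: dhom_cong[OF dhom_Lop] dhom_cong[OF dhom_mult] dhom_cmult r e Suc assms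
                     dhom_cong[OF dhom_Dx] simp: mult.assoc)
qed


fun sv :: "dvar \<Rightarrow> dvar" where
  "sv (W i) = W (Suc i)" | "sv (Rho i) = Rho (Suc i)" | "sv Eps = Eps"

fun rk :: "dvar \<Rightarrow> nat" where
  "rk (W i) = 2 * i" | "rk (Rho i) = 2 * i + 1" | "rk Eps = 0"

lemma lookup_dconst_mult: "Poly_Mapping.lookup (dconst c * X) k = c * Poly_Mapping.lookup X k"
  unfolding dconst_def mult_map_scale_conv_mult[symmetric]
  by (simp add: Poly_Mapping.map.rep_eq when_def)

lemma lookup_Dmon_term:
  "Poly_Mapping.lookup (Poly_Mapping.single (m - Poly_Mapping.single u 1) c * Dv u) t =
     (if u \<noteq> Eps \<and> t = m - Poly_Mapping.single u 1 + Poly_Mapping.single (sv u) 1 then c else 0)"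
  by (cases u) (auto simp: Dv_def dvarp_def mult_single lookup_single when_def)

lemma lookup_Dx:
  "Poly_Mapping.lookup (Dx P) t = (\<Sum>m\<in>Poly_Mapping.keys P. Poly_Mapping.lookup P m *
     (\<Sum>u\<in>Poly_Mapping.keys m. (if u \<noteq> Eps \<and> t = m - Poly_Mapping.single u 1 + Poly_Mapping.single (sv u) 1
        then of_nat (Poly_Mapping.lookup m u) else 0)))"
  unfolding Dx_def Dmon_def
  by (simp only: lookup_sum lookup_dconst_mult lookup_Dmon_term)

definition topv :: "(dvar \<Rightarrow>\<^sub>0 nat) \<Rightarrow> nat" where
  "topv m = Max (rk ` (Poly_Mapping.keys m - {Eps}))"

lemma rk_sv: "u \<noteq> Eps \<Longrightarrow> rk (sv u) = rk u + 2"
  by (cases u) auto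

lemma sv_inj: "u \<noteq> Eps \<Longrightarrow> v \<noteq> Eps \<Longrightarrow> sv u = sv v \<Longrightarrow> u = v"
  by (cases u; cases v) auto


lemma sv_ne: "u \<noteq> Eps \<Longrightarrow> sv u \<noteq> Eps"
  by (cases u) auto

lemma dvw_sv: "u \<noteq> Eps \<Longrightarrow> dvw (sv u) = dvw u + 2"
  by (cases u) auto

lemma topv_ge: "u \<in> Poly_Mapping.keys m \<Longrightarrow> u \<noteq> Eps \<Longrightarrow> rk u \<le> topv m"
  unfolding topv_def by (rule Max_ge) auto

lemma lin_shift:
  assumes "u \<in> Poly_Mapping.keys m" "u \<noteq> Eps"
  shows "lin dvw (m - Poly_Mapping.single u 1 + Poly_Mapping.single (sv u) 1) = lin dvw m + 2"
  using lin_add[of dvw "m - Poly_Mapping.single u 1"] lin_minus_single_eq[OF assms(1)] dvw_sv[OF assms(2)]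
  by simp

lemma dx_hom:
  assumes nc: "no_const P" and h: "dhom (d + 2) (Dx P)"
  shows "dhom d P"
proof (rule ccontr)
  assume "\<not> dhom d P"
  define B where "B = {m\<in>Poly_Mapping.keys P. lin dvw m \<noteq> d}"
  have Bne: "B \<noteq> {}" and Bfin: "finite B" using \<open>\<not> dhom d P\<close> by (auto simp: B_def dhom_def)
  define M where "M = Max (topv ` B)"
  have "M \<in> topv ` B" unfolding M_def using Bne Bfin by (intro Max_in) auto
  then obtain m where mM0: "M = topv m" and mB: "m \<in> B" by (rule imageE)
  then have mM: "topv m = M" by simp
  have maxm: "topv m' \<le> topv m" if "m' \<in> B" for m'
    using that Bfin unfolding mM M_def by (auto intro: Max_ge)
  have mP: "m \<in> Poly_Mapping.keys P" and mw: "lin dvw m \<noteq> d" using mB by (auto simp: B_def)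
  have ne: "Poly_Mapping.keys m - {Eps} \<noteq> {}" using nc mP by (auto simp: no_const_def)
  have "topv m \<in> rk ` (Poly_Mapping.keys m - {Eps})"
    unfolding topv_def using ne by (intro Max_in) auto
  then obtain v where v0: "topv m = rk v" "v \<in> Poly_Mapping.keys m - {Eps}" by (rule imageE)
  then have v: "v \<in> Poly_Mapping.keys m" "v \<noteq> Eps" "rk v = topv m" by auto
  define t where "t = m - Poly_Mapping.single v 1 + Poly_Mapping.single (sv v) 1"
  have svm: "sv v \<notin> Poly_Mapping.keys m"
    using topv_ge[of "sv v" m] sv_ne[OF v(2)] rk_sv[OF v(2)] v(3) by auto
  have tsv: "Poly_Mapping.lookup t (sv v) = 1"
    using svm sv_ne[OF v(2)] v(2) unfolding t_def
    by (cases v) (auto simp: lookup_add lookup_minus lookup_single in_keys_iff when_def)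
  have claim: "(if u \<noteq> Eps \<and> t = m' - Poly_Mapping.single u 1 + Poly_Mapping.single (sv u) 1
        then of_nat (Poly_Mapping.lookup m' u) else (0::rat)) =
      (if m' = m \<and> u = v then of_nat (Poly_Mapping.lookup m v) else 0)"
    if m'P: "m' \<in> Poly_Mapping.keys P" and um': "u \<in> Poly_Mapping.keys m'" for m' u
  proof (cases "u \<noteq> Eps \<and> t = m' - Poly_Mapping.single u 1 + Poly_Mapping.single (sv u) 1")
    case True
    then have uE: "u \<noteq> Eps" and tm': "t = m' - Poly_Mapping.single u 1 + Poly_Mapping.single (sv u) 1" by auto
    have "lin dvw m' + 2 = lin dvw m + 2"
      using lin_shift[OF um' uE] lin_shift[OF v(1,2)] tm' t_def by simp
    then have "m' \<in> B" using m'P mw by (auto simp: B_def)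
    then have tt: "topv m' \<le> rk v" using maxm v(3) by simp
    have svm': "sv v \<notin> Poly_Mapping.keys m'"
      using topv_ge[of "sv v" m'] sv_ne[OF v(2)] rk_sv[OF v(2)] tt by auto
    have "Poly_Mapping.lookup t (sv v) = (if sv u = sv v then 1 else 0)"
      using svm' tm' by (auto simp: lookup_add lookup_minus lookup_single in_keys_iff when_def)
    then have "sv u = sv v" using tsv by (cases "sv u = sv v") simp_all
    then have uv: "u = v" using sv_inj uE v(2) by blast
    have "m' - Poly_Mapping.single v 1 = m - Poly_Mapping.single v 1"
      using tm' t_def uv by simp
    then have "m' = m" using lin_minus_single[OF v(1)] lin_minus_single[of v m'] um' uv by metis
    then show ?thesis using True uv by simp
  next
    case False
    have n1: "\<not> (m' = m \<and> u = v)"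
    proof
      assume "m' = m \<and> u = v"
      then show False using False v(2) t_def by simp
    qed
    show ?thesis by (simp only: if_not_P[OF False] if_not_P[OF n1])
  qed
  have "Poly_Mapping.lookup (Dx P) t = (\<Sum>m'\<in>Poly_Mapping.keys P. Poly_Mapping.lookup P m' *
          (\<Sum>u\<in>Poly_Mapping.keys m'. (if m' = m \<and> u = v then of_nat (Poly_Mapping.lookup m v) else 0)))"
    unfolding lookup_Dx
    by (rule sum.cong[OF refl], rule arg_cong2[where f="(*)"], rule refl, rule sum.cong[OF refl], rule claim)
  also have "\<dots> = (\<Sum>m'\<in>Poly_Mapping.keys P. (if m' = m then Poly_Mapping.lookup P m * of_nat (Poly_Mapping.lookup m v) else 0))"
    by (intro sum.cong refl) (auto simp: v(1))
  also have "\<dots> = Poly_Mapping.lookup P m * of_nat (Poly_Mapping.lookup m v)"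
    using mP by simp
  finally have "Poly_Mapping.lookup (Dx P) t \<noteq> 0"
    using mP v(1) by (simp add: in_keys_iff)
  then have "t \<in> Poly_Mapping.keys (Dx P)" by (simp add: in_keys_iff)
  then have "lin dvw t = d + 2" using h by (auto simp: dhom_def)
  then show False using lin_shift[OF v(1,2)] t_def mw by simp
qed

lemma dhom_K:
  assumes "is_K_family K"
  shows "dhom (-2 - 2 * int n) (K n)"
proof (induction n)
  case 0
  then show ?case using assms dhom_dvarp[of "W 0"] by (simp add: is_K_family_def)
next
  case (Suc n)
  have w: "dhom (-2) dw" using dhom_dvarp[of "W 0"] by simp
  have wx: "dhom 0 dwx" using dhom_dvarp[of "W 1"] by simp
  have wx': "dhom 0 (dvarp (W (Suc 0)))" using dhom_dvarp[of "W 1"] by simp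
  have e: "dhom (-3) deps" using dhom_dvarp[of Eps] by simp
  from assms have eq: "Dx (K (Suc n)) = dconst (2 / (2 * of_nat (Suc n) + 1)) *
          (dw * Dx (K n) + dconst (1/2) * dwx * K n
           + dconst (1/8) * deps * deps * Dx (Dx (Dx (K n))))" and nc: "no_const (K (Suc n))"
    unfolding is_K_family_def by blast+
  have "dhom (-2 - 2 * int (Suc n) + 2) (Dx (K (Suc n)))"
    unfolding eq
    by (intro dhom_cmult dhom_add)
       (auto intro!: dhom_cong[OF dhom_mult] dhom_cmult w wx wx' e Suc dhom_cong[OF dhom_Dx] simp: mult.assoc)
  then show ?case by (rule dx_hom[OF nc])
qed


lemma no_deriv_keys:
  assumes "\<forall>n. Suc n \<le> 0 \<or> T (Suc n) \<notin> Poly_Mapping.keys a" "\<forall>n. S n \<notin> Poly_Mapping.keys a"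
  shows "(\<forall>n. Poly_Mapping.lookup a (T (Suc n)) = 0) \<and> (\<forall>n. Poly_Mapping.lookup a (S n) = 0)"
  using assms by (auto simp: in_keys_iff)

lemma top_HB:
  assumes K: "is_K_family K" and topv: "is_top_solution K w rho"
  shows "HB (int D) (-2) w \<and> HB (int D) (-1) rho"
proof (induction D)
  case 0
  have "\<not> lin sdg a < int 0" for a using lin_sdg_nonneg[of a] by simp
  then show ?case by (simp add: HB_def)
next
  case (Suc D)
  have jets: "\<forall>v. HB (int D) (dvw v) (jet w rho v)" using Suc HB_jet by blast
  have Kh: "\<And>n. dhom (-2 - 2 * int n) (K n)" using dhom_K[OF K] by blast
  have HK: "HB (int D) (-2 - 2 * int n + 2) (sderiv (T 0) (seval (jet w rho) (K n)))" for n
    by (rule HB_sderivT0, rule seval_HB) (use Kh jets in \<open>auto simp: dhom_def\<close>)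
  have HR: "HB (int D) (-1 - 2 * int n + 2) (sderiv (T 0) (seval (jet w rho) (Rfam K n)))" for n
    by (rule HB_sderivT0, rule seval_HB) (use dhom_Rfam[OF Kh] jets in \<open>auto simp: dhom_def\<close>)
  have HQ: "HB (int D) (-2 - 2 * int n + 2) (sderiv (T 0) (seval (jet w rho) (Qfam n)))" for n
    by (rule HB_sderivT0, rule seval_HB) (use dhom_Qfam jets in \<open>auto simp: dhom_def\<close>)
  have H0: "HB (int D) e (\<lambda>_. 0)" for e by (simp add: HB_def)
  from topv have eqs:
    "\<And>n. sderiv (T n) w = sderiv (T 0) (seval (jet w rho) (K n))"
    "\<And>n. sderiv (T n) rho = sderiv (T 0) (seval (jet w rho) (Rfam K n))"
    "\<And>n. sderiv (S n) w = (\<lambda>_. 0)"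
    "\<And>n. sderiv (S n) rho = sderiv (T 0) (seval (jet w rho) (Qfam n))"
    and init: "\<And>m. (\<forall>n. Poly_Mapping.lookup m (T (Suc n)) = 0) \<and> (\<forall>n. Poly_Mapping.lookup m (S n) = 0) \<longrightarrow>
          w m = (if m = Poly_Mapping.single (T 0) 1 then 1 else 0) \<and> rho m = 0"
    unfolding is_top_solution_def by blast+
  have "lin svw a = -2 \<and> lin svw a = -2" if a: "lin sdg a < int (Suc D)" "w a \<noteq> 0" for a
  proof -
    consider (t) n where "T (Suc n) \<in> Poly_Mapping.keys a" | (s) n where "S n \<in> Poly_Mapping.keys a"
      | (z) "(\<forall>n. Poly_Mapping.lookup a (T (Suc n)) = 0) \<and> (\<forall>n. Poly_Mapping.lookup a (S n) = 0)"
      by (auto simp: in_keys_iff)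
    then show ?thesis
    proof cases
      case t
      have "lin svw a = (-2 - 2 * int (Suc n) + 2) + svw (T (Suc n))"
        by (rule HB_step[OF eqs(1) t _ _ HK a(2)]) (use a(1) in auto)
      then show ?thesis by simp
    next
      case s
      have "lin svw a = (-2 - svw (S n)) + svw (S n)"
        by (rule HB_step[OF eqs(3) s _ _ H0 a(2)]) (use a(1) in auto)
      then show ?thesis by simp
    next
      case z
      with init[of a] a(2) have "a = Poly_Mapping.single (T 0) 1" by (auto split: if_splits)
      then show ?thesis by simp
    qed
  qed
  moreover have "lin svw a = -1" if a: "lin sdg a < int (Suc D)" "rho a \<noteq> 0" for a
  proof -
    consider (t) n where "T (Suc n) \<in> Poly_Mapping.keys a" | (s) n where "S n \<in> Poly_Mapping.keys a"
      | (z) "(\<forall>n. Poly_Mapping.lookup a (T (Suc n)) = 0) \<and> (\<forall>n. Poly_Mapping.lookup a (S n) = 0)"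
      by (auto simp: in_keys_iff)
    then show ?thesis
    proof cases
      case t
      have "lin svw a = (-1 - 2 * int (Suc n) + 2) + svw (T (Suc n))"
        by (rule HB_step[OF eqs(2) t _ _ HR a(2)]) (use a(1) in auto)
      then show ?thesis by simp
    next
      case s
      have "lin svw a = (-2 - 2 * int n + 2) + svw (S n)"
        by (rule HB_step[OF eqs(4) s _ _ HQ a(2)]) (use a(1) in auto)
      then show ?thesis by simp
    next
      case z
      with init[of a] a(2) show ?thesis by auto
    qed
  qed
  ultimately show ?case unfolding HB_def by auto
qed

lemma step_full:
  assumes "sderiv v f = g" "v \<in> Poly_Mapping.keys a" "\<And>D. HB D e g" "f a \<noteq> 0"
  shows "lin svw a = e + svw v"
proof -
  define a0 where "a0 = a - Poly_Mapping.single v 1"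
  have aa: "a = a0 + Poly_Mapping.single v 1" unfolding a0_def by (rule lin_minus_single) fact
  have "g a0 = of_nat (Poly_Mapping.lookup a0 v + 1) * f a" using assms(1) aa by (auto simp: sderiv_def)
  then have "g a0 \<noteq> 0" using assms(4) by simp
  then have "lin svw a0 = e" using assms(3)[of "lin sdg a0 + 1"] unfolding HB_def by auto
  then show ?thesis using aa by (simp add: lin_add)
qed

lemma G_hom:
  assumes K: "is_K_family K" and topv: "is_top_solution K w rho" and G: "is_eps_log_tau2 K w rho G"
    and a: "G a \<noteq> 0"
  shows "lin svw a = -3"
proof -
  have Dn: "HB (int D) (-2) w \<and> HB (int D) (-1) rho" for D using top_HB[OF K topv] .
  have HBall: "HB D e f" if "\<And>D. HB (int D) e f" for D e f
    using that[of "nat D"] unfolding HB_def by auto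
  have jets: "\<forall>v. HB D (dvw v) (jet w rho v)" for D
    using HB_jet[of D w rho] HBall Dn by blast
  have Kh: "\<And>n. dhom (-2 - 2 * int n) (K n)" using dhom_K[OF K] by blast
  have HR: "HB D (-1 - 2 * int n) (seval (jet w rho) (Rfam K n))" for n D
    by (rule seval_HB) (use dhom_Rfam[OF Kh] jets in \<open>auto simp: dhom_def\<close>)
  have HQ: "HB D (-2 - 2 * int n) (seval (jet w rho) (Qfam n))" for n D
    by (rule seval_HB) (use dhom_Qfam jets in \<open>auto simp: dhom_def\<close>)
  from G have eqs: "\<And>n. sderiv (T n) G = seval (jet w rho) (Rfam K n)"
    "\<And>n. sderiv (S n) G = seval (jet w rho) (Qfam n)"
    and z: "\<And>p. G (Poly_Mapping.single E p) = 0"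
    unfolding is_eps_log_tau2_def by blast+
  consider (t) n where "T n \<in> Poly_Mapping.keys a" | (s) n where "S n \<in> Poly_Mapping.keys a"
    | (e) "Poly_Mapping.keys a \<subseteq> {E}"
    by (metis insertCI subsetI svar.exhaust)
  then show ?thesis
  proof cases
    case t
    have "lin svw a = (-1 - 2 * int n) + svw (T n)"
      by (rule step_full[OF eqs(1) t HR a])
    then show ?thesis by simp
  next
    case s
    have "lin svw a = (-2 - 2 * int n) + svw (S n)"
      by (rule step_full[OF eqs(2) s HQ a])
    then show ?thesis by simp
  next
    case e
    have "a = Poly_Mapping.single E (Poly_Mapping.lookup a E)"
      by (rule poly_mapping_eqI) (use e in \<open>auto simp: lookup_single when_def in_keys_iff\<close>)
    then have False using z a by metis
    then show ?thesis ..
  qed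
qed

lemma lin_sum_list: "lin f (\<Sum>x\<leftarrow>xs. g x) = (\<Sum>x\<leftarrow>xs. lin f (g x))"
  by (induction xs) (auto simp: lin_add)

lemma sum_list_T: "(\<Sum>k\<leftarrow>ks. 2 * int k - 2) = 2 * int (sum_list ks) - 2 * int (length ks)"
  by (induction ks) auto

lemma sum_list_S: "(\<Sum>k\<leftarrow>ks. 2 * int k - 1) = 2 * int (sum_list ks) - int (length ks)"
  by (induction ks) auto

theorem mainTheorem6:
  fixes K :: "nat \<Rightarrow> dpoly" and w rho G :: ser
    and p :: nat and ks ls :: "nat list"
  assumes "is_K_family K"
    and "is_top_solution K w rho"
    and "is_eps_log_tau2 K w rho G"
    and "length ks + length ls \<ge> 1"
    and "open_corr G p ks ls \<noteq> 0"
  shows "(of_nat (sum_list ks) + of_nat (sum_list ls) - of_nat (length ks)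
            - of_nat (length ls) / 2 :: rat) = 3 / 2 * (of_nat p - 1)"
proof -
  define a where "a = Poly_Mapping.single E p + (\<Sum>k\<leftarrow>ks. Poly_Mapping.single (T k) 1)
                                 + (\<Sum>l\<leftarrow>ls. Poly_Mapping.single (S l) 1)"
  have "G a \<noteq> 0" using assms(5) unfolding open_corr_def a_def by auto
  then have "lin svw a = -3" using G_hom[OF assms(1-3)] by blast
  then have "-3 * int p + (2 * int (sum_list ks) - 2 * int (length ks))
      + (2 * int (sum_list ls) - int (length ls)) = -3"
    unfolding a_def lin_add lin_sum_list by (simp add: sum_list_T sum_list_S comp_def)
  then have "(of_int (-3 * int p + (2 * int (sum_list ks) - 2 * int (length ks))
      + (2 * int (sum_list ls) - int (length ls))) :: rat) = -3" by simp
  then have "- 3 * (of_nat p :: rat) + (2 * of_nat (sum_list ks) - 2 * of_nat (length ks))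
      + (2 * of_nat (sum_list ls) - of_nat (length ls)) = -3" by simp
  then have "2 * (of_nat (sum_list ks) + of_nat (sum_list ls) - of_nat (length ks)
            - of_nat (length ls) / 2 :: rat) = 2 * (3 / 2 * (of_nat p - 1))"
    by (simp add: algebra_simps)
  then show ?thesis by simp
qed

end
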